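(* Let $M$ and $M'$ be as described in the context, with the same initial-state distribution $\rho$ on $S$ and horizon $T$. For every policy $\pi'=(\pi'_1,\dots,\pi'_n)$ on $M'$, \[ V'_{\pi'}(\rho) = V_{\phi(\pi')}(\rho). \]
   Context: Fix integers $n\ge 1$ (agents/radars), $m\ge 1$ (targets), a horizon $T\ge 1$, and write $[m]=\{1,\dots,m\}$ and $\dagger$ for an extra "stop" symbol not in $[m]$. Let $S$ be a finite state space, $\Omega_1,\dots,\Omega_n$ finite individual observation sets, $O(\omega\mid s)$ a probability distribution on $\Omega_1\times\dots\times\Omega_n$ for each $s\in S$, $P(s,\varepsilon,\cdot)$ a probability distribution on $S$ for each $s\in S$ and joint action $\varepsilon=(\varepsilon_1,\dots,\varepsilon_n)\in\mathcal P([m])^n$, and $R:S\times\mathcal P([m])^n\times S\to\mathbb R$ a reward function. The original Dec-POMDP $M$: agent $j$'s action is a subset $\varepsilon_j\subseteq[m]$ (the set of targets it tracks). A policy on $M$ is $\pi=(\pi_1,\dots,\pi_n)$ with each $\pi_j(\cdot\mid\omega_j)$ a probability distribution on $\mathcal P([m])$ for each $\omega_j\in\Omega_j$. Dynamics: $s_0\sim\rho$; at each step $t=0,\dots,T-1$, an observation $\omega_t=(\omega_{t,1},\dots,\omega_{t,n})\sim O(\cdot\mid s_t)$ is drawn, each agent independently draws $\varepsilon_{t,j}\sim\pi_j(\cdot\mid\omega_{t,j})$, then $s_{t+1}\sim P(s_t,\varepsilon_t,\cdot)$ and reward $R(s_t,\varepsilon_t,s_{t+1})$ is received. $V_\pi(\rho)=\mathbb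 E\big[\sum_{t=0}^{T-1}R(s_t,\varepsilon_t,s_{t+1})\big]$. The sequential-choice Dec-POMDP $M'$: its states are pairs $s\otimes\varepsilon$ of an underlying state $s\in S$ and a tuple of partial selections $\varepsilon=(\varepsilon_1,\dots,\varepsilon_n)$, $\varepsilon_j\subseteq[m]$, together with a flag per agent saying whether it has finished. A policy on $M'$ is $\pi'=(\pi'_1,\dots,\pi'_n)$ where, for each $\omega_j\in\Omega_j$ and $E\subseteq[m]$, $\pi'_j(\cdot\mid\omega_j,E)$ is a probability distribution on $([m]\setminus E)\cup\{\dagger\}$. Dynamics: $s_0\sim\rho$; each round $t=0,\dots,T-1$ proceeds as follows. An observation $\omega_t\sim O(\cdot\mid s_t)$ is drawn and stays fixed during the round; all $\varepsilon_j$ start at $\varnothing$ and no agent is finished. At each micro-step, every unfinished agent $j$ independently draws $a_j\sim\pi'_j(\cdot\mid\omega_{t,j},\varepsilon_j)$; if $a_j\in[m]$ then $\varepsilon_j\leftarrow\varepsilon_j\cup\{a_j\}$, and if $a_j=\dagger$ agent $j$ becomes finished; the underlying state does not change and reward $0$ is received. (Since chosen targets cannot be rechosen, each agent finishes after at most $m+1$ micro-steps.) When all agents are finished with selections $\varepsilon=(\varepsilon_1,\dots,\varepsilon_n)$, the underlying state moves to $s_{t+1}\sim P(s_t,\varepsilon,\cdot)$, reward $R(s_t,\varepsilon,s_{t+1})$ is received, and the selections are reset to $\varnothing$. $V'_{\pi'}(\rho)$ is the expected total reward received over the $T$ rounds. Policy transposition: for a policy $\pi'$ on $M'$, $\phi(\pi')$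 is the policy on $M$ with, for each agent $j$, $\omega\in\Omega_j$ and $\varepsilon\subseteq[m]$ with $|\varepsilon|=p$, \[\phi_j(\pi')(\varepsilon\mid\omega)=\sum_{(i_1,\dots,i_p)}\Big(\prod_{l=0}^{p-1}\pi'_j\big(i_{l+1}\mid\omega,\{i_1,\dots,i_l\}\big)\Big)\,\pi'_j(\dagger\mid\omega,\varepsilon),\] where the sum ranges over all $p!$ orderings $(i_1,\dots,i_p)$ of the elements of $\varepsilon$ (for $\varepsilon=\varnothing$ this is $\pi'_j(\dagger\mid\omega,\varnothing)$). *)

theory Defs
  imports "HOL-Probability.Probability" "HOL-Combinatorics.Multiset_Permutations"
begin

(* Conventions:
   - agents are 0..<n, targets are [m] = {1..m} (naturals);
   - a joint observation is a function  nat => 'o  (component j = omega_j);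
   - a joint action is a function  nat => nat set  (component j = epsilon_j, {} for j >= n);
   - the stop symbol dagger is  None,  target i is  Some i. *)

type_synonym 'o obs = "nat \<Rightarrow> 'o"
type_synonym jact = "nat \<Rightarrow> nat set"

fun round_value ::
  "('s \<Rightarrow> 'o obs pmf) \<Rightarrow> ('s \<Rightarrow> jact \<Rightarrow> 's pmf) \<Rightarrow> ('s \<Rightarrow> jact \<Rightarrow> 's \<Rightarrow> real)
   \<Rightarrow> ('o obs \<Rightarrow> jact pmf) \<Rightarrow> nat \<Rightarrow> 's \<Rightarrow> real" where
  "round_value Obs P R A 0 s = 0"
| "round_value Obs P R A (Suc t) s =
     measure_pmf.expectation (Obs s) (\<lambda>\<omega>.
       measure_pmf.expectation (A \<omega>) (\<lambda>\<epsilon>.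
         measure_pmf.expectation (P s \<epsilon>) (\<lambda>s'. R s \<epsilon> s' + round_value Obs P R A t s')))"

definition joint_action_M :: "nat \<Rightarrow> (nat \<Rightarrow> 'o \<Rightarrow> nat set pmf) \<Rightarrow> 'o obs \<Rightarrow> jact pmf" where
  "joint_action_M n \<pi> \<omega> = Pi_pmf {..<n} {} (\<lambda>j. \<pi> j (\<omega> j))"

definition V_M ::
  "nat \<Rightarrow> nat \<Rightarrow> 's pmf \<Rightarrow> ('s \<Rightarrow> 'o obs pmf) \<Rightarrow> ('s \<Rightarrow> jact \<Rightarrow> 's pmf)
   \<Rightarrow> ('s \<Rightarrow> jact \<Rightarrow> 's \<Rightarrow> real) \<Rightarrow> (nat \<Rightarrow> 'o \<Rightarrow> nat set pmf) \<Rightarrow> real" where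
  "V_M n T \<rho> Obs P R \<pi> =
     measure_pmf.expectation \<rho> (round_value Obs P R (joint_action_M n \<pi>) T)"

text \<open>A micro-state is (partial selections, finished flags).
  In one micro-step every unfinished agent j independently draws a_j ~ pi' j (omega j) (eps j);
  finished agents do nothing (modelled by drawing None deterministically, which leaves
  their selection and flag unchanged).\<close>
definition micro_step ::
  "nat \<Rightarrow> (nat \<Rightarrow> 'o \<Rightarrow> nat set \<Rightarrow> nat option pmf) \<Rightarrow> 'o obs
   \<Rightarrow> jact \<times> (nat \<Rightarrow> bool) \<Rightarrow> (jact \<times> (nat \<Rightarrow> bool)) pmf" where
  "micro_step n \<pi>' \<omega> st =
     map_pmf (\<lambda>a. (\<lambda>j. case a j of Some i \<Rightarrow> insert i (fst st j) | None \<Rightarrow> fst st j,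
                    \<lambda>j. snd st j \<or> a j = None))
       (Pi_pmf {..<n} None
          (\<lambda>j. if snd st j then return_pmf None else \<pi>' j (\<omega> j) (fst st j)))"

fun micro_steps ::
  "nat \<Rightarrow> (nat \<Rightarrow> 'o \<Rightarrow> nat set \<Rightarrow> nat option pmf) \<Rightarrow> 'o obs \<Rightarrow> nat
   \<Rightarrow> jact \<times> (nat \<Rightarrow> bool) \<Rightarrow> (jact \<times> (nat \<Rightarrow> bool)) pmf" where
  "micro_steps n \<pi>' \<omega> 0 st = return_pmf st"
| "micro_steps n \<pi>' \<omega> (Suc k) st = bind_pmf (micro_step n \<pi>' \<omega> st) (micro_steps n \<pi>' \<omega> k)"

text \<open>Every agent finishes within m+1 micro-steps and finished configurations are fixed points,
  so m+1 micro-steps reach the state where all agents are finished.\<close>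
definition joint_action_M' ::
  "nat \<Rightarrow> nat \<Rightarrow> (nat \<Rightarrow> 'o \<Rightarrow> nat set \<Rightarrow> nat option pmf) \<Rightarrow> 'o obs \<Rightarrow> jact pmf" where
  "joint_action_M' n m \<pi>' \<omega> =
     map_pmf fst (micro_steps n \<pi>' \<omega> (Suc m) (\<lambda>_. {}, \<lambda>_. False))"

definition V_M' ::
  "nat \<Rightarrow> nat \<Rightarrow> nat \<Rightarrow> 's pmf \<Rightarrow> ('s \<Rightarrow> 'o obs pmf) \<Rightarrow> ('s \<Rightarrow> jact \<Rightarrow> 's pmf)
   \<Rightarrow> ('s \<Rightarrow> jact \<Rightarrow> 's \<Rightarrow> real) \<Rightarrow> (nat \<Rightarrow> 'o \<Rightarrow> nat set \<Rightarrow> nat option pmf) \<Rightarrow> real" where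
  "V_M' n m T \<rho> Obs P R \<pi>' =
     measure_pmf.expectation \<rho> (round_value Obs P R (joint_action_M' n m \<pi>') T)"

definition valid_policy' :: "nat \<Rightarrow> nat \<Rightarrow> (nat \<Rightarrow> 'o \<Rightarrow> nat set \<Rightarrow> nat option pmf) \<Rightarrow> bool" where
  "valid_policy' n m \<pi>' \<longleftrightarrow>
     (\<forall>j<n. \<forall>\<omega> E. E \<subseteq> {1..m} \<longrightarrow>
        set_pmf (\<pi>' j \<omega> E) \<subseteq> insert None (Some ` ({1..m} - E)))"

definition phi_weight ::
  "nat \<Rightarrow> (nat \<Rightarrow> 'o \<Rightarrow> nat set \<Rightarrow> nat option pmf) \<Rightarrow> nat \<Rightarrow> 'o \<Rightarrow> nat set \<Rightarrow> real" where
  "phi_weight m \<pi>' j \<omega> \<epsilon> =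
     (if \<epsilon> \<subseteq> {1..m} then
        (\<Sum>xs\<in>permutations_of_set \<epsilon>.
           (\<Prod>l<length xs. pmf (\<pi>' j \<omega> (set (take l xs))) (Some (xs ! l))))
        * pmf (\<pi>' j \<omega> \<epsilon>) None
      else 0)"

definition phi ::
  "nat \<Rightarrow> (nat \<Rightarrow> 'o \<Rightarrow> nat set \<Rightarrow> nat option pmf) \<Rightarrow> nat \<Rightarrow> 'o \<Rightarrow> nat set pmf" where
  "phi m \<pi>' j \<omega> = embed_pmf (phi_weight m \<pi>' j \<omega>)"

end

theory Submission
  imports Defs
begin

definition sstep :: "(nat set \<Rightarrow> nat option pmf) \<Rightarrow> nat set \<times> bool \<Rightarrow> (nat set \<times> bool) pmf" where
  "sstep q x = map_pmf (\<lambda>a. (case a of Some i \<Rightarrow> insert i (fst x) | None \<Rightarrow> fst x, snd x \<or> a = None))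
      (if snd x then return_pmf None else q (fst x))"

fun ssteps :: "(nat set \<Rightarrow> nat option pmf) \<Rightarrow> nat \<Rightarrow> nat set \<times> bool \<Rightarrow> (nat set \<times> bool) pmf" where
  "ssteps q 0 x = return_pmf x"
| "ssteps q (Suc k) x = bind_pmf (sstep q x) (ssteps q k)"

definition W :: "nat \<Rightarrow> (nat set \<Rightarrow> nat option pmf) \<Rightarrow> nat set \<Rightarrow> nat set \<Rightarrow> real" where
  "W m q E \<epsilon> = (if E \<subseteq> \<epsilon> \<and> \<epsilon> \<subseteq> {1..m} then
      (\<Sum>xs\<in>permutations_of_set (\<epsilon> - E).
         (\<Prod>l<length xs. pmf (q (E \<union> set (take l xs))) (Some (xs ! l)))) * pmf (q \<epsilon>) None
     else 0)"

lemma ssteps_finished: "ssteps q k (E, True) = return_pmf (E, True)"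
  by (induction k) (simp_all add: sstep_def bind_return_pmf)

lemma W_rec:
  assumes "E \<subseteq> {1..m}"
  shows "W m q E \<epsilon> = (if \<epsilon> = E then pmf (q E) None else 0)
           + (\<Sum>i\<in>{1..m} - E. pmf (q E) (Some i) * W m q (insert i E) \<epsilon>)"
proof (cases "E \<subseteq> \<epsilon> \<and> \<epsilon> \<subseteq> {1..m}")
  case False
  then have "\<epsilon> \<noteq> E" using assms by auto
  moreover have "W m q (insert i E) \<epsilon> = 0" for i using False by (auto simp: W_def)
  moreover have "W m q E \<epsilon> = 0" unfolding W_def using False by (simp only: if_False)
  ultimately show ?thesis by simp
next
  case True
  show ?thesis
  proof (cases "\<epsilon> = E")
    case True
    have "W m q (insert i E) \<epsilon> = 0" if "i \<notin> E" for i using True that by (auto simp: W_def)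
    then show ?thesis using True assms by (simp add: W_def)
  next
    case False
    with True have ne: "\<epsilon> - E \<noteq> {}" by auto
    have fin: "finite \<epsilon>" using True finite_subset by blast
    define F where "F = (\<lambda>E xs. \<Prod>l<length xs. pmf (q (E \<union> set (take l xs))) (Some (xs ! l)))"
    have "(\<Sum>xs\<in>permutations_of_set (\<epsilon> - E). F E xs)
        = (\<Sum>x\<in>\<epsilon> - E. \<Sum>xs\<in>(\<lambda>xs. x # xs) ` permutations_of_set (\<epsilon> - E - {x}). F E xs)"
      unfolding permutations_of_set_nonempty[OF ne]
      by (rule sum.UNION_disjoint) (use fin in auto)
    also have "\<dots> = (\<Sum>x\<in>\<epsilon> - E. \<Sum>ys\<in>permutations_of_set (\<epsilon> - insert x E). F E (x # ys))"
      by (rule sum.cong, simp, subst sum.reindex) (auto simp: inj_on_def Diff_insert[symmetric] insert_commute)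
    also have "\<dots> = (\<Sum>x\<in>\<epsilon> - E. pmf (q E) (Some x) * (\<Sum>ys\<in>permutations_of_set (\<epsilon> - insert x E). F (insert x E) ys))"
      unfolding sum_distrib_left F_def
      by (intro sum.cong refl) (simp add: prod.lessThan_Suc_shift del: prod.lessThan_Suc)
    finally have eq: "(\<Sum>xs\<in>permutations_of_set (\<epsilon> - E). F E xs) = \<dots>" .
    have "(\<Sum>i\<in>{1..m} - E. pmf (q E) (Some i) * W m q (insert i E) \<epsilon>)
        = (\<Sum>i\<in>\<epsilon> - E. pmf (q E) (Some i) * W m q (insert i E) \<epsilon>)"
      by (rule sum.mono_neutral_right) (use True in \<open>auto simp: W_def\<close>)
    also have "\<dots> = (\<Sum>x\<in>\<epsilon> - E. pmf (q E) (Some x) * (\<Sum>ys\<in>permutations_of_set (\<epsilon> - insert x E). F (insert x E) ys)) * pmf (q \<epsilon>) None"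
      unfolding sum_distrib_right using True by (intro sum.cong refl) (auto simp: W_def F_def)
    finally show ?thesis using True False eq by (simp add: W_def F_def)
  qed
qed

lemma ssteps_pmf:
  assumes valid: "\<And>E. E \<subseteq> {1..m} \<Longrightarrow> set_pmf (q E) \<subseteq> insert None (Some ` ({1..m} - E))"
  shows "E \<subseteq> {1..m} \<Longrightarrow> card ({1..m} - E) < k \<Longrightarrow>
         pmf (map_pmf fst (ssteps q k (E, False))) \<epsilon> = W m q E \<epsilon>"
proof (induction k arbitrary: E)
  case 0 then show ?case by simp
next
  case (Suc k)
  define g where "g = (\<lambda>a. (case a of Some i \<Rightarrow> insert i E | None \<Rightarrow> E, a = None))"
  have eq: "map_pmf fst (ssteps q (Suc k) (E, False)) = bind_pmf (q E) (\<lambda>a. map_pmf fst (ssteps q k (g a)))"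
  proof -
    have s: "sstep q (E, False) = map_pmf g (q E)"
      unfolding sstep_def g_def by (intro map_pmf_cong) (auto split: option.split)
    show ?thesis by (simp only: ssteps.simps map_bind_pmf s bind_map_pmf o_def)
  qed
  have "pmf (map_pmf fst (ssteps q (Suc k) (E, False))) \<epsilon>
     = pmf (bind_pmf (q E) (\<lambda>a. map_pmf fst (ssteps q k (g a)))) \<epsilon>" by (simp only: eq)
  also have "\<dots> = (\<Sum>a\<in>insert None (Some ` ({1..m} - E)). pmf (q E) a * pmf (map_pmf fst (ssteps q k (g a))) \<epsilon>)"
    unfolding pmf_bind
    by (subst integral_measure_pmf[where A="insert None (Some ` ({1..m} - E))"])
       (use valid[OF Suc.prems(1)] in \<open>auto simp: mult.commute\<close>)
  also have "\<dots> = pmf (q E) None * pmf (map_pmf fst (ssteps q k (g None))) \<epsilon>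
      + (\<Sum>i\<in>{1..m} - E. pmf (q E) (Some i) * pmf (map_pmf fst (ssteps q k (g (Some i)))) \<epsilon>)"
    by (subst sum.insert) (auto simp: sum.reindex)
  also have "\<dots> = (if \<epsilon> = E then pmf (q E) None else 0)
           + (\<Sum>i\<in>{1..m} - E. pmf (q E) (Some i) * W m q (insert i E) \<epsilon>)"
  proof -
    have "pmf (map_pmf fst (ssteps q k (g None))) \<epsilon> = (if \<epsilon> = E then 1 else 0)"
      by (simp add: g_def ssteps_finished)
    moreover have "pmf (map_pmf fst (ssteps q k (g (Some i)))) \<epsilon> = W m q (insert i E) \<epsilon>"
      if "i \<in> {1..m} - E" for i
    proof -
      have sub: "{1..m} - insert i E \<subset> {1..m} - E" using that by blast
      have c: "card ({1..m} - insert i E) < card ({1..m} - E)"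
        by (rule psubset_card_mono[OF _ sub]) simp
      have gi: "g (Some i) = (insert i E, False)" by (simp add: g_def)
      have "insert i E \<subseteq> {1..m}" using that Suc.prems(1) by blast
      moreover have "card ({1..m} - insert i E) < k" using c Suc.prems(2) by linarith
      ultimately show ?thesis unfolding gi by (rule Suc.IH)
    qed
    ultimately show ?thesis by simp
  qed
  also have "\<dots> = W m q E \<epsilon>" by (rule W_rec[OF Suc.prems(1), symmetric])
  finally show ?case .
qed

definition hproj :: "nat \<Rightarrow> jact \<times> (nat \<Rightarrow> bool) \<Rightarrow> nat \<Rightarrow> nat set \<times> bool" where
  "hproj n st = (\<lambda>j. if j < n then (fst st j, snd st j) else ({}, False))"

lemma micro_step_proj:
  "map_pmf (hproj n) (micro_step n \<pi>' \<omega> st) =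
     Pi_pmf {..<n} ({}, False) (\<lambda>j. sstep (\<pi>' j (\<omega> j)) (hproj n st j))"
proof -
  define D where "D = (\<lambda>j. if snd st j then return_pmf None else \<pi>' j (\<omega> j) (fst st j))"
  define G where "G = (\<lambda>j a. (case a of Some i \<Rightarrow> insert i (fst st j) | None \<Rightarrow> fst st j, snd st j \<or> a = None))"
  have "Pi_pmf {..<n} ({}, False) (\<lambda>j. sstep (\<pi>' j (\<omega> j)) (hproj n st j))
      = Pi_pmf {..<n} ({}, False) (\<lambda>j. bind_pmf (D j) (\<lambda>a. return_pmf (G j a)))"
    by (intro Pi_pmf_cong refl) (simp add: sstep_def hproj_def D_def G_def map_pmf_def cong: option.case_cong)
  also have "\<dots> = bind_pmf (Pi_pmf {..<n} None D) (\<lambda>f. Pi_pmf {..<n} ({}, False) (\<lambda>j. return_pmf (G j (f j))))"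
    by (rule Pi_pmf_bind) simp
  also have "\<dots> = bind_pmf (Pi_pmf {..<n} None D) (\<lambda>f. return_pmf (\<lambda>j. if j \<in> {..<n} then G j (f j) else ({}, False)))"
    by (subst Pi_pmf_return_pmf) simp_all
  also have "\<dots> = map_pmf (hproj n) (micro_step n \<pi>' \<omega> st)"
    unfolding micro_step_def pmf.map_comp D_def[symmetric] map_pmf_def[symmetric]
    by (intro map_pmf_cong refl) (auto simp: hproj_def G_def fun_eq_iff split: option.split)
  finally show ?thesis by simp
qed

lemma micro_steps_proj:
  "map_pmf (hproj n) (micro_steps n \<pi>' \<omega> k st) =
     Pi_pmf {..<n} ({}, False) (\<lambda>j. ssteps (\<pi>' j (\<omega> j)) k (hproj n st j))"
proof (induction k arbitrary: st)
  case 0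
  have "(\<lambda>j. if j \<in> {..<n} then hproj n st j else ({}, False)) = hproj n st"
    by (auto simp: hproj_def fun_eq_iff)
  then show ?case by simp
next
  case (Suc k)
  have "map_pmf (hproj n) (micro_steps n \<pi>' \<omega> (Suc k) st)
      = bind_pmf (micro_step n \<pi>' \<omega> st) (\<lambda>s. map_pmf (hproj n) (micro_steps n \<pi>' \<omega> k s))"
    by (simp add: map_bind_pmf)
  also have "\<dots> = bind_pmf (micro_step n \<pi>' \<omega> st)
       (\<lambda>s. Pi_pmf {..<n} ({}, False) (\<lambda>j. ssteps (\<pi>' j (\<omega> j)) k (hproj n s j)))"
    by (simp only: Suc.IH)
  also have "\<dots> = bind_pmf (map_pmf (hproj n) (micro_step n \<pi>' \<omega> st))
       (\<lambda>f. Pi_pmf {..<n} ({}, False) (\<lambda>j. ssteps (\<pi>' j (\<omega> j)) k (f j)))"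
    by (simp add: bind_map_pmf o_def)
  also have "\<dots> = bind_pmf (Pi_pmf {..<n} ({}, False) (\<lambda>j. sstep (\<pi>' j (\<omega> j)) (hproj n st j)))
       (\<lambda>f. Pi_pmf {..<n} ({}, False) (\<lambda>j. ssteps (\<pi>' j (\<omega> j)) k (f j)))"
    by (simp only: micro_step_proj)
  also have "\<dots> = Pi_pmf {..<n} ({}, False)
       (\<lambda>j. bind_pmf (sstep (\<pi>' j (\<omega> j)) (hproj n st j)) (ssteps (\<pi>' j (\<omega> j)) k))"
    by (rule Pi_pmf_bind[symmetric]) simp
  finally show ?case by simp
qed

lemma micro_steps_outside:
  "st' \<in> set_pmf (micro_steps n \<pi>' \<omega> k st) \<Longrightarrow> n \<le> j \<Longrightarrow> fst st' j = fst st j"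
proof (induction k arbitrary: st)
  case 0 then show ?case by simp
next
  case (Suc k)
  from Suc.prems obtain s where s: "s \<in> set_pmf (micro_step n \<pi>' \<omega> st)"
    and st': "st' \<in> set_pmf (micro_steps n \<pi>' \<omega> k s)" by auto
  have "fst st' j = fst s j" using Suc.IH[OF st' Suc.prems(2)] .
  also from s obtain a where a: "a \<in> set_pmf (Pi_pmf {..<n} None
          (\<lambda>j. if snd st j then return_pmf None else \<pi>' j (\<omega> j) (fst st j)))"
    and sa: "s = (\<lambda>j. case a j of Some i \<Rightarrow> insert i (fst st j) | None \<Rightarrow> fst st j,
                    \<lambda>j. snd st j \<or> a j = None)"
    unfolding micro_step_def by auto
  have "a j = None" using set_Pi_pmf_subset[of "{..<n}" None] a Suc.prems(2) by force
  then have "fst s j = fst st j" using sa by simp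
  finally show ?case .
qed


lemma phi_single:
  assumes "valid_policy' n m \<pi>'" and "j < n"
  shows "phi m \<pi>' j w = map_pmf fst (ssteps (\<pi>' j w) (Suc m) ({}, False))"
proof -
  let ?Q = "map_pmf fst (ssteps (\<pi>' j w) (Suc m) ({}, False))"
  have valid: "\<And>E. E \<subseteq> {1..m} \<Longrightarrow> set_pmf (\<pi>' j w E) \<subseteq> insert None (Some ` ({1..m} - E))"
    using assms unfolding valid_policy'_def by blast
  have "phi_weight m \<pi>' j w = pmf ?Q"
  proof
    fix \<epsilon>
    have "pmf ?Q \<epsilon> = W m (\<pi>' j w) {} \<epsilon>"
      by (rule ssteps_pmf[OF valid]) simp_all
    then show "phi_weight m \<pi>' j w \<epsilon> = pmf ?Q \<epsilon>"
      by (simp add: W_def phi_weight_def)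
  qed
  then show ?thesis unfolding phi_def
    by (simp add: type_definition.Rep_inverse[OF td_pmf_embed_pmf])
qed

lemma joint_eq:
  assumes "valid_policy' n m \<pi>'"
  shows "joint_action_M' n m \<pi>' \<omega> = joint_action_M n (phi m \<pi>') \<omega>"
proof -
  let ?st0 = "((\<lambda>_. {}) :: jact, (\<lambda>_. False) :: nat \<Rightarrow> bool)"
  have "joint_action_M' n m \<pi>' \<omega> = map_pmf (\<lambda>st j. fst (hproj n st j)) (micro_steps n \<pi>' \<omega> (Suc m) ?st0)"
    unfolding joint_action_M'_def
  proof (intro map_pmf_cong refl)
    fix st assume st: "st \<in> set_pmf (micro_steps n \<pi>' \<omega> (Suc m) ?st0)"
    show "fst st = (\<lambda>j. fst (hproj n st j))"
    proof
      fix j show "fst st j = fst (hproj n st j)"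
        using micro_steps_outside[OF st, of j] by (cases "j < n") (auto simp: hproj_def)
    qed
  qed
  also have "\<dots> = map_pmf (\<lambda>f. fst \<circ> f) (map_pmf (hproj n) (micro_steps n \<pi>' \<omega> (Suc m) ?st0))"
    by (simp add: pmf.map_comp o_def)
  also have "hproj n ?st0 = (\<lambda>_. ({}, False))" by (auto simp: hproj_def fun_eq_iff)
  then have "map_pmf (hproj n) (micro_steps n \<pi>' \<omega> (Suc m) ?st0)
      = Pi_pmf {..<n} ({}, False) (\<lambda>j. ssteps (\<pi>' j (\<omega> j)) (Suc m) ({}, False))"
    by (simp only: micro_steps_proj)
  also have "map_pmf (\<lambda>f. fst \<circ> f) (Pi_pmf {..<n} ({}, False) (\<lambda>j. ssteps (\<pi>' j (\<omega> j)) (Suc m) ({}, False)))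
      = Pi_pmf {..<n} {} (\<lambda>j. map_pmf fst (ssteps (\<pi>' j (\<omega> j)) (Suc m) ({}, False)))"
    by (rule Pi_pmf_map[symmetric]) simp_all
  also have "\<dots> = Pi_pmf {..<n} {} (\<lambda>j. phi m \<pi>' j (\<omega> j))"
    by (intro Pi_pmf_cong refl) (simp add: phi_single[OF assms])
  finally show ?thesis unfolding joint_action_M_def .
qed

theorem lemma1:
  fixes n m T :: nat
    and \<rho> :: "'s::finite pmf"
    and Obs :: "'s \<Rightarrow> ('o::finite) obs pmf"
    and P :: "'s \<Rightarrow> jact \<Rightarrow> 's pmf"
    and R :: "'s \<Rightarrow> jact \<Rightarrow> 's \<Rightarrow> real"
    and \<pi>' :: "nat \<Rightarrow> 'o \<Rightarrow> nat set \<Rightarrow> nat option pmf"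
  assumes "n \<ge> 1" and "m \<ge> 1" and "T \<ge> 1"
    and "valid_policy' n m \<pi>'"
  shows "V_M' n m T \<rho> Obs P R \<pi>' = V_M n T \<rho> Obs P R (phi m \<pi>')"
proof -
  have "joint_action_M' n m \<pi>' = joint_action_M n (phi m \<pi>')"
    using joint_eq[OF assms(4)] by blast
  then show ?thesis unfolding V_M'_def V_M_def by simp
qed

end
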